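(* Let $n \geq 2$ and let $(x_i, y_i)_{i=1}^n$ be labeled examples with $x_i \in \mathbb{R}^d$, $y_i \in \{-1,+1\}$ and $\max_i \|x_i\| \leq 1$. Let $X = [x_1,\dots,x_n] \in \mathbb{R}^{d\times n}$ and let $\sigma^2$ satisfy $\sigma^2 \geq \frac{1}{n}\|X\|^2$ (spectral norm). For $b \in \{1,\dots,n\}$ set $\beta_b := 1 + \frac{(b-1)(n\sigma^2-1)}{n-1}$. For $w \in \mathbb{R}^d$ and $A \subseteq \{1,\dots,n\}$ with $|A| = b$ define $$\nabla \hat{L}_A(w) := -\frac{1}{b}\sum_{i\in A} \chi_i(w)\, y_i x_i,$$ where $\chi_i(w) = 1$ if $y_i\langle w, x_i\rangle < 1$ and $\chi_i(w)=0$ otherwise. Then for every $w \in \mathbb{R}^d$, if $A$ is drawn uniformly at random among all subsets of $\{1,\dots,n\}$ of cardinality $b$, $$\mathbb{E}\big[\|\nabla \hat{L}_A(w)\|^2\big] \leq \frac{\beta_b}{b}.$$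
   Context: $\nabla \hat{L}_A(w)$ is a subgradient of the average hinge loss $\hat{L}_A(w) = \frac{1}{b}\sum_{i\in A}\max\{0, 1 - y_i\langle w, x_i\rangle\}$. $\|X\|$ is the spectral norm of $X$. *)

theory Defs
  imports "HOL-Analysis.Analysis" "HOL-Probability.Probability"
begin

text \<open>Examples are indexed by a finite type 'n (so n = CARD('n)), features live in real^'d.\<close>

definition data_matrix :: "('n::finite \<Rightarrow> real^'d::finite) \<Rightarrow> real^'n^'d" where
  "data_matrix x = (\<chi> j i. x i $ j)"

definition spectral_norm :: "real^'n::finite^'m::finite \<Rightarrow> real" where
  "spectral_norm M = onorm (\<lambda>v. M *v v)"

definition chi :: "('n \<Rightarrow> real^'d::finite) \<Rightarrow> ('n \<Rightarrow> real) \<Rightarrow> real^'d \<Rightarrow> 'n \<Rightarrow> real" where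
  "chi x y w i = (if y i * (w \<bullet> x i) < 1 then 1 else 0)"

definition hinge_subgrad :: "('n \<Rightarrow> real^'d::finite) \<Rightarrow> ('n \<Rightarrow> real) \<Rightarrow> 'n set \<Rightarrow> real^'d \<Rightarrow> real^'d" where
  "hinge_subgrad x y A w = - ((1 / real (card A)) *\<^sub>R (\<Sum>i\<in>A. (chi x y w i * y i) *\<^sub>R x i))"

definition beta :: "nat \<Rightarrow> real \<Rightarrow> nat \<Rightarrow> real" where
  "beta n \<sigma>2 b = 1 + (real b - 1) * (real n * \<sigma>2 - 1) / (real n - 1)"

end

theory Submission imports Defs begin

lemma count1:
  assumes "1 \<le> b"
  shows "card {A::'n::finite set. card A = b \<and> i \<in> A} = (CARD('n) - 1) choose (b - 1)"
proof -
  have "bij_betw (insert i) {B. B \<subseteq> -{i} \<and> card B = b - 1} {A::'n set. card A = b \<and> i \<in> A}"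
  proof (rule bij_betw_byWitness[where f' = "\<lambda>A. A - {i}"])
    show "\<forall>a\<in>{B. B \<subseteq> - {i} \<and> card B = b - 1}. insert i a - {i} = a" by auto
    show "\<forall>a'\<in>{A::'n set. card A = b \<and> i \<in> A}. insert i (a' - {i}) = a'" by auto
    show "insert i ` {B. B \<subseteq> - {i} \<and> card B = b - 1} \<subseteq> {A. card A = b \<and> i \<in> A}"
      using assms by (auto simp: card_insert_if)
    show "(\<lambda>A. A - {i}) ` {A. card A = b \<and> i \<in> A} \<subseteq> {B. B \<subseteq> - {i} \<and> card B = b - 1}"
      by auto
  qed
  hence "card {A::'n set. card A = b \<and> i \<in> A} = card {B. B \<subseteq> -{i} \<and> card B = b - 1}"
    by (simp add: bij_betw_same_card)
  also have "\<dots> = card (-{i::'n}) choose (b - 1)" by (rule n_subsets) simp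
  also have "card (-{i::'n}) = CARD('n) - 1"
    by (simp add: Compl_eq_Diff_UNIV card_Diff_singleton)
  finally show ?thesis .
qed

lemma count2:
  assumes "2 \<le> b" "i \<noteq> j"
  shows "card {A::'n::finite set. card A = b \<and> i \<in> A \<and> j \<in> A} = (CARD('n) - 2) choose (b - 2)"
proof -
  have "bij_betw (\<lambda>B. insert i (insert j B)) {B. B \<subseteq> -{i,j} \<and> card B = b - 2} {A::'n set. card A = b \<and> i \<in> A \<and> j \<in> A}"
  proof (rule bij_betw_byWitness[where f' = "\<lambda>A. A - {i,j}"])
    show "\<forall>a\<in>{B. B \<subseteq> - {i,j} \<and> card B = b - 2}. insert i (insert j a) - {i,j} = a" by auto
    show "\<forall>a'\<in>{A::'n set. card A = b \<and> i \<in> A \<and> j \<in> A}. insert i (insert j (a' - {i,j})) = a'" by auto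
    show "(\<lambda>B. insert i (insert j B)) ` {B. B \<subseteq> - {i,j} \<and> card B = b - 2} \<subseteq> {A. card A = b \<and> i \<in> A \<and> j \<in> A}"
      using assms by (auto simp: card_insert_if)
    show "(\<lambda>A. A - {i,j}) ` {A. card A = b \<and> i \<in> A \<and> j \<in> A} \<subseteq> {B. B \<subseteq> - {i,j} \<and> card B = b - 2}"
      using assms by (auto simp: card_Diff_subset)
  qed
  hence "card {A::'n set. card A = b \<and> i \<in> A \<and> j \<in> A} = card {B. B \<subseteq> -{i,j} \<and> card B = b - 2}"
    by (simp add: bij_betw_same_card)
  also have "\<dots> = card (-{i::'n,j}) choose (b - 2)" by (rule n_subsets) simp
  also have "card (-{i::'n,j}) = CARD('n) - 2"
    using assms(2) by (simp add: Compl_eq_Diff_UNIV card_Diff_subset)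
  finally show ?thesis .
qed


lemma count_real:
  assumes "1 \<le> b" "b \<le> CARD('n::finite)"
  shows "real (card {A::'n set. card A = b \<and> i \<in> A \<and> j \<in> A}) =
    (if i = j then real b * real (CARD('n) choose b) / real CARD('n)
     else real b * (real b - 1) * real (CARD('n) choose b) / (real CARD('n) * (real CARD('n) - 1)))"
proof -
  let ?n = "CARD('n)"
  have npos: "?n > 0" by simp
  have a1: "b * (?n choose b) = ?n * ((?n - 1) choose (b - 1))"
    using binomial_absorption[of "b-1" ?n] assms by simp
  show ?thesis
  proof (cases "i = j")
    case True
    have "real (card {A::'n set. card A = b \<and> i \<in> A \<and> j \<in> A}) = real ((?n - 1) choose (b - 1))"
      using count1[OF assms(1), of i] True by simp
    also have "\<dots> = real b * real (?n choose b) / real ?n"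
      using arg_cong[OF a1, of real] npos by (simp add: field_simps)
    finally show ?thesis using True by simp
  next
    case False
    show ?thesis
    proof (cases "b = 1")
      case True
      have "{A::'n set. card A = b \<and> i \<in> A \<and> j \<in> A} = {}"
      proof -
        have "False" if h: "card A = b" "i \<in> A" "j \<in> A" for A :: "'n set"
        proof -
          have "card {i,j} \<le> card A" using h by (intro card_mono) auto
          thus False using False True h(1) by simp
        qed
        thus ?thesis by blast
      qed
      thus ?thesis using True False by simp
    next
      case b1: False
      hence b2: "2 \<le> b" using assms by simp
      have n2: "2 \<le> ?n" using b2 assms by simp
      have a2: "(b - 1) * ((?n - 1) choose (b - 1)) = (?n - 1) * ((?n - 2) choose (b - 2))"
        using binomial_absorption[of "b-2" "?n - 1"] b2 by (simp add: Suc_diff_Suc numeral_2_eq_2)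
      have "b * (b - 1) * (?n choose b) = (b - 1) * (b * (?n choose b))" by (simp only: ac_simps)
      also have "\<dots> = ?n * ((b - 1) * ((?n - 1) choose (b - 1)))" by (simp only: a1 ac_simps)
      also have "\<dots> = ?n * (?n - 1) * ((?n - 2) choose (b - 2))" by (simp only: a2 ac_simps)
      finally have e0: "b * (b - 1) * (?n choose b) = ?n * (?n - 1) * ((?n - 2) choose (b - 2))" .
      have e: "real b * (real b - 1) * real (?n choose b) = real ?n * (real ?n - 1) * real ((?n - 2) choose (b - 2))"
        using arg_cong[OF e0, of real] b2 n2 by (simp add: of_nat_diff)
      have "real (card {A::'n set. card A = b \<and> i \<in> A \<and> j \<in> A}) = real ((?n - 2) choose (b - 2))"
        using count2[OF b2 False] by simp
      also have "\<dots> = real b * (real b - 1) * real (?n choose b) / (real ?n * (real ?n - 1))"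
        using e n2 by (simp add: field_simps)
      finally show ?thesis using False by simp
    qed
  qed
qed


lemma matrix_sum:
  fixes x :: "'n::finite \<Rightarrow> real^'d::finite"
  shows "data_matrix x *v c = (\<Sum>i\<in>UNIV. (c $ i) *\<^sub>R x i)"
  by (simp add: vec_eq_iff matrix_vector_mult_def data_matrix_def sum_component mult.commute)

lemma alg:
  fixes B D t :: real
  assumes "D \<noteq> 0" "B \<noteq> 0"
  shows "1 / B\<^sup>2 * (t * (B * (B - 1) / D) + B - B * (B - 1) / D) = (1 + (B - 1) * (t - 1) / D) / B"
proof -
  have "t * (B * (B - 1) / D) + B - B * (B - 1) / D = B * (1 + (B - 1) * (t - 1) / D)"
    using assms by (simp add: field_simps)
  thus ?thesis using assms by (simp add: power2_eq_square)
qed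

theorem lemma2:
  fixes x :: "'n::finite \<Rightarrow> real^'d::finite" and y :: "'n \<Rightarrow> real"
    and \<sigma>2 :: real and b :: nat and w :: "real^'d"
  assumes "CARD('n) \<ge> 2"
    and "\<And>i. y i \<in> {-1, 1}"
    and "\<And>i. norm (x i) \<le> 1"
    and "\<sigma>2 \<ge> (1 / real CARD('n)) * (spectral_norm (data_matrix x))\<^sup>2"
    and "1 \<le> b" and "b \<le> CARD('n)"
  shows "measure_pmf.expectation (pmf_of_set {A :: 'n set. card A = b})
           (\<lambda>A. (norm (hinge_subgrad x y A w))\<^sup>2)
         \<le> beta CARD('n) \<sigma>2 b / real b"
proof -
  define n where "n = CARD('n)"
  define S where "S = {A :: 'n set. card A = b}"
  define N where "N = n choose b"
  define z where "z i = (chi x y w i * y i) *\<^sub>R x i" for i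
  define q1 where "q1 = real b / real n"
  define q2 where "q2 = real b * (real b - 1) / (real n * (real n - 1))"
  define T where "T = (\<Sum>i\<in>UNIV. \<Sum>j\<in>UNIV. z i \<bullet> z j)"
  define Q where "Q = (\<Sum>i\<in>UNIV. z i \<bullet> z i)"
  have n2: "real n \<ge> 2" using assms(1) unfolding n_def by simp
  have bpos: "real b \<ge> 1" using assms(5) by simp
  have bn: "real b \<le> real n" using assms(6) unfolding n_def by simp
  have finS: "finite S" by simp
  have cardS: "card S = N"
    unfolding S_def N_def n_def using n_subsets[of "UNIV :: 'n set" b] by simp
  have Npos: "N > 0" unfolding N_def using assms(6) n_def by simp
  hence neS: "S \<noteq> {}" using cardS by auto
  have f: "(norm (hinge_subgrad x y A w))\<^sup>2 =
       (1 / (real b)\<^sup>2) * (\<Sum>i\<in>UNIV. \<Sum>j\<in>UNIV. if i \<in> A \<and> j \<in> A then z i \<bullet> z j else 0)"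
    if "A \<in> S" for A
  proof -
    have cA: "card A = b" using that S_def by simp
    have "(norm (hinge_subgrad x y A w))\<^sup>2 = (1 / (real b))\<^sup>2 * (norm (\<Sum>i\<in>A. z i))\<^sup>2"
      unfolding hinge_subgrad_def z_def cA by (simp add: power_mult_distrib power_divide)
    also have "(norm (\<Sum>i\<in>A. z i))\<^sup>2 = (\<Sum>i\<in>A. \<Sum>j\<in>A. z i \<bullet> z j)"
      by (simp add: power2_norm_eq_inner inner_sum_left inner_sum_right) (rule sum.swap)
    also have "\<dots> = (\<Sum>i\<in>UNIV. \<Sum>j\<in>UNIV. if i \<in> A \<and> j \<in> A then z i \<bullet> z j else 0)"
    proof -
      have "(\<Sum>i\<in>A. \<Sum>j\<in>A. z i \<bullet> z j) = (\<Sum>i\<in>UNIV. if i \<in> A then (\<Sum>j\<in>UNIV. if j \<in> A then z i \<bullet> z j else 0) else 0)"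
      proof -
        have h: "\<And>g. (\<Sum>x\<in>UNIV. if x \<in> A then g x else 0) = sum g A"
          by (simp add: sum.If_cases)
        show ?thesis by (simp only: h)
      qed
      also have "\<dots> = (\<Sum>i\<in>UNIV. \<Sum>j\<in>UNIV. if i \<in> A \<and> j \<in> A then z i \<bullet> z j else 0)"
        by (intro sum.cong refl) auto
      finally show ?thesis .
    qed
    finally show ?thesis by (simp add: power_divide)
  qed
  have sumS: "(\<Sum>A\<in>S. (norm (hinge_subgrad x y A w))\<^sup>2) = real N / (real b)\<^sup>2 * (q2 * T + (q1 - q2) * Q)"
  proof -
    have "(\<Sum>A\<in>S. (norm (hinge_subgrad x y A w))\<^sup>2) =
        (1 / (real b)\<^sup>2) * (\<Sum>A\<in>S. \<Sum>i\<in>UNIV. \<Sum>j\<in>UNIV. if i \<in> A \<and> j \<in> A then z i \<bullet> z j else 0)"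
      by (simp add: f sum_distrib_left)
    also have "(\<Sum>A\<in>S. \<Sum>i\<in>UNIV. \<Sum>j\<in>UNIV. if i \<in> A \<and> j \<in> A then z i \<bullet> z j else 0)
        = (\<Sum>i\<in>UNIV. \<Sum>j\<in>UNIV. \<Sum>A\<in>S. if i \<in> A \<and> j \<in> A then z i \<bullet> z j else 0)"
      by (subst sum.swap) (simp add: sum.swap[of _ S])
    also have "\<dots> = (\<Sum>i\<in>UNIV. \<Sum>j\<in>UNIV. real (card {A :: 'n set. card A = b \<and> i \<in> A \<and> j \<in> A}) * (z i \<bullet> z j))"
    proof (intro sum.cong refl)
      fix i j
      have "(\<Sum>A\<in>S. if i \<in> A \<and> j \<in> A then z i \<bullet> z j else 0) = (\<Sum>A\<in>{A\<in>S. i \<in> A \<and> j \<in> A}. z i \<bullet> z j)"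
        using sum.inter_filter[OF finS, of "\<lambda>_. z i \<bullet> z j" "\<lambda>A. i \<in> A \<and> j \<in> A"] by simp
      also have "{A\<in>S. i \<in> A \<and> j \<in> A} = {A :: 'n set. card A = b \<and> i \<in> A \<and> j \<in> A}"
        unfolding S_def by auto
      finally show "(\<Sum>A\<in>S. if i \<in> A \<and> j \<in> A then z i \<bullet> z j else 0) = real (card {A :: 'n set. card A = b \<and> i \<in> A \<and> j \<in> A}) * (z i \<bullet> z j)"
        by simp
    qed
    also have "\<dots> = (\<Sum>i\<in>UNIV. \<Sum>j\<in>UNIV. real N * q2 * (z i \<bullet> z j) + (if i = j then real N * (q1 - q2) * (z i \<bullet> z j) else 0))"
    proof (intro sum.cong refl)
      fix i j :: 'n
      show "real (card {A :: 'n set. card A = b \<and> i \<in> A \<and> j \<in> A}) * (z i \<bullet> z j) =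
          real N * q2 * (z i \<bullet> z j) + (if i = j then real N * (q1 - q2) * (z i \<bullet> z j) else 0)"
        using count_real[OF assms(5,6), of i j] unfolding N_def n_def q1_def q2_def
        by (auto simp: field_simps)
    qed
    also have "\<dots> = real N * q2 * T + real N * (q1 - q2) * Q"
      unfolding T_def Q_def by (simp add: sum.distrib sum_distrib_left)
    finally show ?thesis by (simp add: field_simps)
  qed
  have zn: "norm (z i) \<le> 1" for i
  proof -
    have "\<bar>chi x y w i * y i\<bar> \<le> 1" using assms(2)[of i] by (auto simp: chi_def)
    hence "norm (z i) \<le> 1 * norm (x i)" unfolding z_def using mult_right_mono[of _ 1 "norm (x i)"] by simp
    thus ?thesis using assms(3)[of i] by simp
  qed
  have Qb: "Q \<le> real n"
  proof -
    have "Q \<le> (\<Sum>i\<in>(UNIV::'n set). 1)" unfolding Q_def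
    proof (rule sum_mono)
      fix i :: 'n
      have "z i \<bullet> z i = (norm (z i))\<^sup>2" by (simp add: power2_norm_eq_inner)
      also have "\<dots> \<le> 1" using zn[of i] by (simp add: power_le_one)
      finally show "z i \<bullet> z i \<le> 1" .
    qed
    thus ?thesis unfolding n_def by simp
  qed
  define c :: "real^'n" where "c = (\<chi> i. chi x y w i * y i)"
  have Tb: "T \<le> real n ^ 2 * \<sigma>2"
  proof -
    have sz: "(\<Sum>i\<in>UNIV. z i) = data_matrix x *v c"
      unfolding matrix_sum c_def z_def by simp
    have T_eq: "T = (norm (data_matrix x *v c))\<^sup>2"
      unfolding T_def sz[symmetric] by (simp add: power2_norm_eq_inner inner_sum_left inner_sum_right) (rule sum.swap)
    have cn: "(norm c)\<^sup>2 \<le> real n"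
    proof -
      have "(norm c)\<^sup>2 = (\<Sum>i\<in>UNIV. (c $ i) * (c $ i))" by (simp add: power2_norm_eq_inner inner_vec_def)
      also have "\<dots> \<le> (\<Sum>i\<in>(UNIV::'n set). 1)"
      proof (rule sum_mono)
        fix i :: 'n
        show "c $ i * c $ i \<le> 1" using assms(2)[of i] by (auto simp: c_def chi_def)
      qed
      finally show ?thesis unfolding n_def by simp
    qed
    define s where "s = spectral_norm (data_matrix x)"
    have s0: "s \<ge> 0" unfolding s_def spectral_norm_def
      by (rule onorm_pos_le) simp
    have "norm (data_matrix x *v c) \<le> s * norm c"
      unfolding s_def spectral_norm_def by (rule onorm) simp
    hence "(norm (data_matrix x *v c))\<^sup>2 \<le> (s * norm c)\<^sup>2"
      by (simp add: power_mono)
    also have "\<dots> = s\<^sup>2 * (norm c)\<^sup>2" by (simp add: power_mult_distrib)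
    also have "\<dots> \<le> s\<^sup>2 * real n" using cn by (simp add: mult_left_mono)
    also have "s\<^sup>2 \<le> real n * \<sigma>2"
      using assms(4) n2 unfolding s_def n_def by (simp add: field_simps)
    hence "s\<^sup>2 * real n \<le> real n * \<sigma>2 * real n" using n2 by (simp add: mult_right_mono)
    also have "\<dots> = real n ^ 2 * \<sigma>2" by (simp add: power2_eq_square)
    finally show ?thesis using T_eq by simp
  qed
  have q2nn: "q2 \<ge> 0" unfolding q2_def using n2 bpos by simp
  have q12: "q1 - q2 \<ge> 0"
  proof -
    have "real b * (real b - 1) \<le> real b * (real n - 1)" using bpos bn by simp
    hence "q2 \<le> real b * (real n - 1) / (real n * (real n - 1))" unfolding q2_def
      using n2 by (intro divide_right_mono) auto
    also have "\<dots> = q1" unfolding q1_def using n2 by (simp add: field_simps)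
    finally show ?thesis by simp
  qed
  have E: "measure_pmf.expectation (pmf_of_set S) (\<lambda>A. (norm (hinge_subgrad x y A w))\<^sup>2)
      = (1 / (real b)\<^sup>2) * (q2 * T + (q1 - q2) * Q)"
    using integral_pmf_of_set[OF neS finS] sumS cardS Npos by simp
  have "q2 * T + (q1 - q2) * Q \<le> q2 * (real n ^ 2 * \<sigma>2) + (q1 - q2) * real n"
    using Tb Qb q2nn q12 by (intro add_mono mult_left_mono) auto
  hence "(1 / (real b)\<^sup>2) * (q2 * T + (q1 - q2) * Q) \<le> (1 / (real b)\<^sup>2) * (q2 * (real n ^ 2 * \<sigma>2) + (q1 - q2) * real n)"
    by (intro mult_left_mono) auto
  also have "\<dots> = beta n \<sigma>2 b / real b"
  proof -
    have M1: "real n - 1 \<noteq> 0" "real n \<noteq> 0" using n2 by auto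
    have B0: "real b \<noteq> 0" using bpos by auto
    have h1: "q1 * real n = real b" unfolding q1_def using M1 by simp
    have h2: "q2 * real n = real b * (real b - 1) / (real n - 1)" unfolding q2_def using M1 by simp
    have "q2 * (real n ^ 2 * \<sigma>2) + (q1 - q2) * real n
        = (real n * \<sigma>2) * (q2 * real n) + q1 * real n - q2 * real n"
      by (simp add: power2_eq_square algebra_simps)
    also have "\<dots> = (real n * \<sigma>2) * (real b * (real b - 1) / (real n - 1)) + real b - real b * (real b - 1) / (real n - 1)"
      by (simp only: h1 h2)
    finally have e: "q2 * (real n ^ 2 * \<sigma>2) + (q1 - q2) * real n = \<dots>" .
    show ?thesis unfolding e beta_def using alg[OF M1(1) B0, of "real n * \<sigma>2"] by simp
  qed
  finally show ?thesis using E unfolding S_def n_def by simp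
qed

end
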